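(* Let $d=(d_1,\ldots,d_n)$ be a degree sequence with $n\ge 3$, and let $m=\frac12\sum_i d_i$. There is a bridge-less cactus realization of $d$ if and only if $m\le\lfloor 1.5(n-1)\rfloor$ and $d_i$ is even for every $i$.
   Context: A degree sequence is a sequence $d=(d_1,\ldots,d_n)$ of integers with $d_i\in\{1,\ldots,n-1\}$, even sum, and $d_1\ge\cdots\ge d_n$. A realization of $d$ is a simple graph on $\{1,\ldots,n\}$ in which vertex $i$ has degree $d_i$. A cactus is a connected simple graph in which every edge lies on at most one cycle; it is bridge-less if no edge's removal disconnects it. *)

theory Defs
  imports Complex_Main
begin

definition degree_sequence :: "nat \<Rightarrow> (nat \<Rightarrow> nat) \<Rightarrow> bool" where
  "degree_sequence n d \<longleftrightarrow>
     (\<forall>i\<in>{1..n}. 1 \<le> d i \<and> d i \<le> n - 1) \<and>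
     even (\<Sum>i=1..n. d i) \<and>
     (\<forall>i\<in>{1..n}. \<forall>j\<in>{1..n}. i \<le> j \<longrightarrow> d j \<le> d i)"

definition simple_graph :: "'a set \<Rightarrow> 'a set set \<Rightarrow> bool" where
  "simple_graph V E \<longleftrightarrow> finite V \<and> (\<forall>e\<in>E. e \<subseteq> V \<and> card e = 2)"

definition degree :: "'a set set \<Rightarrow> 'a \<Rightarrow> nat" where
  "degree E v = card {e\<in>E. v \<in> e}"

definition adj :: "'a set set \<Rightarrow> 'a \<Rightarrow> 'a \<Rightarrow> bool" where
  "adj E u v \<longleftrightarrow> {u, v} \<in> E"

definition connected_graph :: "'a set \<Rightarrow> 'a set set \<Rightarrow> bool" where
  "connected_graph V E \<longleftrightarrow> (\<forall>u\<in>V. \<forall>v\<in>V. (adj E)\<^sup>*\<^sup>* u v)"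

text \<open>A cycle of the graph, identified with its edge set: distinct vertices
  v_0,...,v_(k-1), k >= 3, consecutive (cyclically) ones adjacent.\<close>
definition is_cycle :: "'a set set \<Rightarrow> 'a set set \<Rightarrow> bool" where
  "is_cycle E C \<longleftrightarrow> C \<subseteq> E \<and> (\<exists>vs. distinct vs \<and> length vs \<ge> 3 \<and>
      C = {{vs ! i, vs ! ((i + 1) mod length vs)} | i. i < length vs})"

definition cactus :: "'a set \<Rightarrow> 'a set set \<Rightarrow> bool" where
  "cactus V E \<longleftrightarrow> simple_graph V E \<and> connected_graph V E \<and>
     (\<forall>e\<in>E. \<forall>C1 C2. is_cycle E C1 \<and> is_cycle E C2 \<and> e \<in> C1 \<and> e \<in> C2 \<longrightarrow> C1 = C2)"

definition bridgeless :: "'a set \<Rightarrow> 'a set set \<Rightarrow> bool" where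
  "bridgeless V E \<longleftrightarrow> (\<forall>e\<in>E. connected_graph V (E - {e}))"

definition realization :: "nat \<Rightarrow> (nat \<Rightarrow> nat) \<Rightarrow> nat set set \<Rightarrow> bool" where
  "realization n d E \<longleftrightarrow> simple_graph {1..n} E \<and> (\<forall>i\<in>{1..n}. degree E i = d i)"

end

theory Submission
  imports Defs "HOL-Library.Transitive_Closure_Table"
begin


definition cedge :: "'a list \<Rightarrow> nat \<Rightarrow> 'a set" where
  "cedge vs i = {vs ! i, vs ! ((i + 1) mod length vs)}"

lemma cyc_set: "{{vs ! i, vs ! ((i + 1) mod length vs)} | i. i < length vs} = cedge vs ` {..<length vs}"
  unfolding cedge_def by auto

lemma mod_succ_ne:
  fixes i L :: nat assumes "i < L" "L \<ge> 2" shows "(i + 1) mod L \<noteq> i"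
  using assms by (cases "i + 1 < L") (auto simp: mod_if)

lemma mod_succ2_ne:
  fixes i L :: nat assumes "i < L" "L \<ge> 3" shows "((i + 1) mod L + 1) mod L \<noteq> i"
proof -
  consider "i + 2 < L" | "i + 2 = L" | "i + 1 = L" using assms by linarith
  then show ?thesis using assms by cases (auto simp: mod_if)
qed

lemma cedge_inj:
  assumes "distinct vs" "length vs \<ge> 3" "i < length vs" "k < length vs"
    "cedge vs i = cedge vs k"
  shows "i = k"
proof -
  let ?L = "length vs"
  have L0: "?L > 0" using assms by auto
  have m1: "(i + 1) mod ?L < ?L" "(k + 1) mod ?L < ?L" using L0 by auto
  from assms(5) have "(vs!i = vs!k \<and> vs!((i+1) mod ?L) = vs!((k+1) mod ?L)) \<or>
      (vs!i = vs!((k+1) mod ?L) \<and> vs!((i+1) mod ?L) = vs!k)"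
    unfolding cedge_def by (auto simp: doubleton_eq_iff)
  then show ?thesis
  proof
    assume "vs!i = vs!k \<and> vs!((i+1) mod ?L) = vs!((k+1) mod ?L)"
    then show ?thesis using assms nth_eq_iff_index_eq by blast
  next
    assume h: "vs!i = vs!((k+1) mod ?L) \<and> vs!((i+1) mod ?L) = vs!k"
    then have a: "i = (k+1) mod ?L" and b: "(i+1) mod ?L = k"
      using assms m1 nth_eq_iff_index_eq by blast+
    have "((i + 1) mod ?L + 1) mod ?L = i" by (simp only: b a[symmetric])
    then show ?thesis using mod_succ2_ne[of i ?L] assms(2,3) by simp
  qed
qed

lemma card_cyc:
  assumes "distinct vs" "length vs \<ge> 3"
  shows "card (cedge vs ` {..<length vs}) = length vs"
  using cedge_inj[OF assms] by (subst card_image) (auto intro: inj_onI)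

lemma cedge_card2:
  assumes "distinct vs" "length vs \<ge> 3" "i < length vs"
  shows "card (cedge vs i) = 2"
proof -
  have "(i + 1) mod length vs \<noteq> i" using mod_succ_ne assms by auto
  then have "vs ! i \<noteq> vs ! ((i + 1) mod length vs)"
  proof -
    have "(i+1) mod length vs < length vs" using assms by (metis mod_less_divisor not_less0 gr0I)
    then show ?thesis using assms \<open>(i + 1) mod length vs \<noteq> i\<close> by (simp add: nth_eq_iff_index_eq)
  qed
  then show ?thesis unfolding cedge_def by simp
qed

lemma cyc_vertex:
  assumes "w \<in> f" "f \<in> cedge vs ` {..<length vs}"
  shows "w \<in> set vs"
proof -
  from assms obtain i where i: "i < length vs" "w = vs!i \<or> w = vs!((i+1) mod length vs)"
    by (auto simp: cedge_def)
  then have "(i+1) mod length vs < length vs" by (metis mod_less_divisor not_less0 gr0I)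
  then show ?thesis using i by (auto intro!: nth_mem)
qed

lemma cyc_deg:
  assumes "distinct vs" "length vs \<ge> 3"
  shows "card {f \<in> cedge vs ` {..<length vs}. w \<in> f} = (if w \<in> set vs then 2 else 0)"
proof (cases "w \<in> set vs")
  case False
  have "{f \<in> cedge vs ` {..<length vs}. w \<in> f} = {}"
  proof (rule ccontr)
    assume "{f \<in> cedge vs ` {..<length vs}. w \<in> f} \<noteq> {}"
    then obtain f where f: "f \<in> cedge vs ` {..<length vs}" "w \<in> f" by blast
    have "w \<in> set vs" using cyc_vertex[OF f(2) f(1)] .
    then show False using False by blast
  qed
  then show ?thesis using False by simp
next
  case True
  let ?L = "length vs"
  obtain j where j: "j < ?L" "w = vs ! j" using True unfolding in_set_conv_nth by blast
  define p where "p = (j + ?L - 1) mod ?L"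
  have L1: "j + ?L - 1 = j + (?L - 1)" using j by auto
  have L0: "?L > 0" using j by auto
  have p1: "p < ?L" unfolding p_def using L0 by simp
  have "(p + 1) mod ?L = ((j + (?L - 1)) + 1) mod ?L" unfolding p_def L1 by (simp add: mod_Suc_eq)
  also have "\<dots> = (j + ?L) mod ?L"
  proof -
    have "j + (?L - 1) + 1 = j + ?L" using L0 by linarith
    then show ?thesis by (simp only:)
  qed
  also have "\<dots> = j" using j by simp
  finally have p: "p < ?L" "(p + 1) mod ?L = j" using p1 by auto
  have "{f \<in> cedge vs ` {..<length vs}. w \<in> f} = {cedge vs j, cedge vs p}"
  proof (rule set_eqI, rule iffI)
    fix f assume "f \<in> {f \<in> cedge vs ` {..<length vs}. w \<in> f}"
    then obtain i where i: "i < ?L" "f = cedge vs i" "w \<in> cedge vs i" by auto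
    then have "vs ! i = vs ! j \<or> vs ! ((i+1) mod ?L) = vs ! j" using j unfolding cedge_def by auto
    moreover have "(i + 1) mod ?L < ?L" using L0 by simp
    ultimately have "i = j \<or> (i + 1) mod ?L = j" using i j assms
      by (simp add: nth_eq_iff_index_eq)
    moreover have "(i + 1) mod ?L = j \<Longrightarrow> i = p"
    proof -
      assume "(i + 1) mod ?L = j"
      then have "p = ((i + 1) mod ?L + (?L - 1)) mod ?L" unfolding p_def L1 by simp
      also have "\<dots> = (i + 1 + (?L - 1)) mod ?L" by (simp add: mod_add_left_eq)
      also have "\<dots> = (i + ?L) mod ?L"
      proof -
        have "i + 1 + (?L - 1) = i + ?L" using L0 by linarith
        then show ?thesis by (simp only:)
      qed
      finally show "i = p" using i by simp
    qed
    ultimately have "i = j \<or> i = p" by blast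
    then show "f \<in> {cedge vs j, cedge vs p}" using i by auto
  next
    fix f assume "f \<in> {cedge vs j, cedge vs p}"
    then consider "f = cedge vs j" | "f = cedge vs p" by blast
    then show "f \<in> {f \<in> cedge vs ` {..<length vs}. w \<in> f}"
    proof cases
      case 1
      then show ?thesis using j by (auto simp: cedge_def)
    next
      case 2
      then have "w \<in> f" using j p by (simp add: cedge_def)
      then show ?thesis using 2 p by blast
    qed
  qed
  moreover have "cedge vs j \<noteq> cedge vs p"
  proof
    assume "cedge vs j = cedge vs p"
    then have "j = p" using cedge_inj assms j p by blast
    moreover have "(p + 1) mod ?L \<noteq> p" using mod_succ_ne[of p ?L] p assms by linarith
    ultimately show False using p by simp
  qed
  ultimately show ?thesis using True by simp
qed



lemma is_cycle_alt: "is_cycle E C \<longleftrightarrow> C \<subseteq> E \<and>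
   (\<exists>vs. distinct vs \<and> length vs \<ge> 3 \<and> C = cedge vs ` {..<length vs})"
  unfolding is_cycle_def cyc_set ..

lemma is_cycle_sub: "is_cycle E C \<Longrightarrow> C \<subseteq> F \<Longrightarrow> is_cycle F C"
  unfolding is_cycle_alt by blast

lemma cycle_card: assumes "is_cycle E C" shows "card C \<ge> 3" "finite C"
proof -
  obtain vs where "distinct vs" "length vs \<ge> 3" "C = cedge vs ` {..<length vs}"
    using assms unfolding is_cycle_alt by blast
  then show "card C \<ge> 3" "finite C" using card_cyc[of vs] by simp_all
qed

lemma cycle_deg: assumes "is_cycle E C" shows "even (card {f\<in>C. w \<in> f})"
proof -
  obtain vs where "distinct vs" "length vs \<ge> 3" "C = cedge vs ` {..<length vs}"
    using assms unfolding is_cycle_alt by blast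
  then show ?thesis using cyc_deg[of vs w] by simp
qed

lemma mod_walk_ne:
  fixes j k L :: nat assumes "j < L" "k + 1 < L" shows "(j + 1 + k) mod L \<noteq> j"
proof (cases "j + 1 + k < L")
  case True then show ?thesis by simp
next
  case False
  then have "(j + 1 + k) mod L = (j + 1 + k - L) mod L" using le_mod_geq[of L "j+1+k"] by simp
  also have "\<dots> = j + 1 + k - L" using assms by (intro mod_less) linarith
  finally have "(j + 1 + k) mod L = j + 1 + k - L" .
  then show ?thesis using assms False by linarith
qed

lemma cycle_sub_eq:
  assumes D: "is_cycle E D" and C: "is_cycle E C" and sub: "D \<subseteq> C"
  shows "D = C"
proof (rule ccontr)
  assume ne: "D \<noteq> C"
  obtain vs where vs: "distinct vs" "length vs \<ge> 3" "C = cedge vs ` {..<length vs}"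
    using C unfolding is_cycle_alt by blast
  obtain ws where ws: "distinct ws" "length ws \<ge> 3" "D = cedge ws ` {..<length ws}"
    using D unfolding is_cycle_alt by blast
  let ?L = "length vs"
  have L0: "?L > 0" using vs by auto
  define I where "I = {i. i < ?L \<and> cedge vs i \<in> D}"
  have "D \<noteq> {}" using cycle_card[OF D] by auto
  then obtain f0 where "f0 \<in> D" by blast
  then obtain i0 where i0: "i0 \<in> I" using sub vs unfolding I_def by auto
  have "\<exists>i\<in>I. (i + 1) mod ?L \<notin> I"
  proof (rule ccontr)
    assume "\<not> ?thesis"
    then have cl: "\<And>i. i \<in> I \<Longrightarrow> (i + 1) mod ?L \<in> I" by blast
    have all: "(i0 + k) mod ?L \<in> I" for k
    proof (induction k)
      case 0 then show ?case using i0 unfolding I_def by simp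
    next
      case (Suc k)
      have "((i0 + k) mod ?L + 1) mod ?L = (i0 + Suc k) mod ?L" by (simp add: mod_Suc_eq)
      then show ?case using cl[OF Suc] by simp
    qed
    have "C \<subseteq> D"
    proof
      fix f assume "f \<in> C"
      then obtain i where i: "i < ?L" "f = cedge vs i" using vs by auto
      have "i0 < ?L" using i0 unfolding I_def by simp
      then have "(i0 + (i + ?L - i0)) mod ?L = i" using i by simp
      then have "i \<in> I" using all[of "i + ?L - i0"] by simp
      then show "f \<in> D" using i unfolding I_def by simp
    qed
    then show False using ne sub by blast
  qed
  then obtain i where i: "i \<in> I" "(i + 1) mod ?L \<notin> I" by blast
  define j where "j = (i + 1) mod ?L"
  have j: "j < ?L" unfolding j_def using L0 by simp
  define w where "w = vs ! j"
  have iL: "i < ?L" and eD: "cedge vs i \<in> D" using i unfolding I_def by auto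
  have ejD: "cedge vs j \<notin> D" using i j unfolding I_def j_def by simp
  have wi: "w \<in> cedge vs i" unfolding w_def j_def cedge_def by simp
  have wj: "w \<in> cedge vs j" unfolding w_def cedge_def by simp
  have "w \<in> set ws" using cyc_vertex[OF wi] eD ws(3) by blast
  then have c2: "card {f\<in>D. w \<in> f} = 2" using cyc_deg[OF ws(1,2), of w] ws(3) by simp
  have "w \<in> set vs" using j unfolding w_def by (rule nth_mem)
  then have cC: "card {f\<in>C. w \<in> f} = 2" using cyc_deg[OF vs(1,2), of w] vs(3) by simp
  have sub2: "{f\<in>D. w \<in> f} \<subseteq> {f\<in>C. w \<in> f} - {cedge vs j}" using sub ejD by blast
  have fin: "finite {f\<in>C. w \<in> f}" using vs(3) by simp
  have "cedge vs j \<in> {f\<in>C. w \<in> f}" using wj j vs(3) by simp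
  then have "card ({f\<in>C. w \<in> f} - {cedge vs j}) = 1" using cC fin by simp
  moreover have "card {f\<in>D. w \<in> f} \<le> card ({f\<in>C. w \<in> f} - {cedge vs j})"
    by (rule card_mono[OF _ sub2]) (use fin in simp)
  ultimately have "card {f\<in>D. w \<in> f} \<le> 1" by simp
  then show False using c2 by simp
qed

abbreviation reach :: "'a set set \<Rightarrow> 'a \<Rightarrow> 'a \<Rightarrow> bool" where
  "reach F \<equiv> (adj F)\<^sup>*\<^sup>*"

lemma adj_sym: "adj F u v = adj F v u"
  unfolding adj_def by (simp add: insert_commute)

lemma reach_sym: "reach F u v \<Longrightarrow> reach F v u"
proof (induction rule: rtranclp_induct)
  case base then show ?case by simp
next
  case (step y z)
  then show ?case using adj_sym converse_rtranclp_into_rtranclp by metis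
qed

lemma reach_mono: "reach F u v \<Longrightarrow> F \<subseteq> F' \<Longrightarrow> reach F' u v"
proof (induction rule: rtranclp_induct)
  case base then show ?case by simp
next
  case (step y z)
  then have "adj F' y z" unfolding adj_def by blast
  then show ?case using step by (meson rtranclp.rtrancl_into_rtrancl)
qed

lemma cycle_walk:
  assumes "distinct vs" "length vs \<ge> 3" "j < length vs" "k \<le> length vs - 1"
  shows "reach (cedge vs ` {..<length vs} - {cedge vs j})
           (vs ! ((j + 1) mod length vs)) (vs ! ((j + 1 + k) mod length vs))"
  using assms(4)
proof (induction k)
  case 0 then show ?case by simp
next
  case (Suc k)
  let ?L = "length vs"
  define i where "i = (j + 1 + k) mod ?L"
  have L0: "?L > 0" using assms by auto
  have iL: "i < ?L" unfolding i_def using L0 by simp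
  have "i \<noteq> j" unfolding i_def using mod_walk_ne[of j ?L k] assms Suc.prems by linarith
  then have ne: "cedge vs i \<noteq> cedge vs j" using cedge_inj[OF assms(1,2) iL assms(3)] by blast
  have nx: "(i + 1) mod ?L = (j + 1 + Suc k) mod ?L" unfolding i_def by (simp add: mod_Suc_eq)
  have "adj (cedge vs ` {..<length vs} - {cedge vs j}) (vs ! i) (vs ! ((j + 1 + Suc k) mod ?L))"
    unfolding adj_def using ne iL nx[symmetric] by (auto simp: cedge_def)
  moreover have "reach (cedge vs ` {..<length vs} - {cedge vs j})
           (vs ! ((j + 1) mod length vs)) (vs ! i)" using Suc unfolding i_def by simp
  ultimately show ?case by (meson rtranclp.rtrancl_into_rtrancl)
qed

lemma cycle_edge_conn:
  assumes "is_cycle E C" "e \<in> C"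
  shows "\<exists>x y. e = {x, y} \<and> reach (C - {e}) x y"
proof -
  obtain vs where vs: "distinct vs" "length vs \<ge> 3" "C = cedge vs ` {..<length vs}"
    using assms unfolding is_cycle_alt by blast
  let ?L = "length vs"
  obtain j where j: "j < ?L" "e = cedge vs j" using assms(2) vs by auto
  have "reach (C - {e}) (vs ! ((j + 1) mod ?L)) (vs ! ((j + 1 + (?L - 1)) mod ?L))"
    using cycle_walk[OF vs(1,2) j(1), of "?L - 1"] vs(3) j(2) by simp
  moreover have "(j + 1 + (?L - 1)) mod ?L = j"
  proof -
    have "j + 1 + (?L - 1) = j + ?L" using vs(2) by linarith
    then show ?thesis using j by simp
  qed
  ultimately have "reach (C - {e}) (vs ! ((j + 1) mod ?L)) (vs ! j)" by simp
  then show ?thesis using j(2) unfolding cedge_def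
    by (intro exI[of _ "vs ! ((j + 1) mod ?L)"] exI[of _ "vs ! j"]) (simp add: insert_commute)
qed

lemma cycle_conn_all:
  assumes vs: "distinct vs" "length vs \<ge> 3" and k: "k < length vs"
  shows "reach (cedge vs ` {..<length vs}) (vs ! 0) (vs ! k)"
proof -
  let ?L = "length vs"
  have "reach (cedge vs ` {..<length vs} - {cedge vs (?L - 1)})
           (vs ! ((?L - 1 + 1) mod ?L)) (vs ! ((?L - 1 + 1 + k) mod ?L))"
    by (rule cycle_walk[OF vs]) (use k in auto)
  moreover have e0: "?L - 1 + 1 = ?L" using vs by linarith
  moreover have eq1: "(?L - 1 + 1) mod ?L = 0" by (simp only: e0 mod_self)
  moreover have eq2: "(?L - 1 + 1 + k) mod ?L = k"
  proof -
    have "?L - 1 + 1 + k = k + ?L" using vs by linarith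
    then show ?thesis using k by simp
  qed
  ultimately have "reach (cedge vs ` {..<length vs} - {cedge vs (?L - 1)}) (vs ! 0) (vs ! k)"
    by (simp only: eq1 eq2)
  then show ?thesis by (rule reach_mono[OF _ Diff_subset])
qed

lemma path_cycle:
  assumes e: "e \<in> E" "e = {u, v}" "u \<noteq> v" and r: "reach (E - {e}) u v"
  shows "\<exists>C. is_cycle E C \<and> e \<in> C"
proof -
  obtain xs0 where h0: "rtrancl_path (adj (E - {e})) u xs0 v" using r rtranclp_eq_rtrancl_path by metis
  obtain xs where p: "rtrancl_path (adj (E - {e})) u xs v" and dist: "distinct (u # xs)"
    and "set xs \<subseteq> set xs0"
    by (rule rtrancl_path_distinct[OF h0])
  have xsne: "xs \<noteq> []" using p e(3) by (cases rule: rtrancl_path.cases) auto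
  have lst: "last xs = v" using rtrancl_path_last[OF p xsne] .
  define vs where "vs = u # xs"
  let ?L = "length vs"
  have adjs: "adj (E - {e}) (vs ! i) (vs ! (i + 1))" if "i < length xs" for i
    using rtrancl_path_nth[OF p that] unfolding vs_def by simp
  have L3: "?L \<ge> 3"
  proof (rule ccontr)
    assume "\<not> ?L \<ge> 3"
    then have "length xs \<le> 1" unfolding vs_def by simp
    moreover have "length xs \<noteq> 0" using xsne by simp
    ultimately have "length xs = 1" by linarith
    then obtain y where "xs = [y]" by (cases xs) auto
    then have "adj (E - {e}) u v" using adjs[of 0] lst unfolding vs_def by simp
    then show False using e unfolding adj_def by simp
  qed
  have lastv: "vs ! (?L - 1) = v" using lst xsne unfolding vs_def by (simp add: last_conv_nth)
  define C where "C = cedge vs ` {..<?L}"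
  have "C \<subseteq> E"
  proof
    fix f assume "f \<in> C"
    then obtain i where i: "i < ?L" "f = cedge vs i" unfolding C_def by auto
    show "f \<in> E"
    proof (cases "i + 1 < ?L")
      case True
      then have "f = {vs ! i, vs ! (i + 1)}" using i unfolding cedge_def by simp
      then show ?thesis using adjs[of i] True unfolding adj_def vs_def by simp
    next
      case False
      then have "i = ?L - 1" using i by simp
      then have "i + 1 = ?L" using i by linarith
      then have "(i + 1) mod ?L = 0" by simp
      then have "f = {v, u}" using i \<open>i = ?L - 1\<close> lastv unfolding cedge_def vs_def by simp
      then show ?thesis using e by (simp add: insert_commute)
    qed
  qed
  moreover have "e \<in> C"
  proof -
    have e0: "?L - 1 + 1 = ?L" using L3 by linarith
    have "(?L - 1 + 1) mod ?L = 0" by (simp only: e0 mod_self)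
    then have "cedge vs (?L - 1) = {v, u}" using lastv unfolding cedge_def vs_def by simp
    moreover have "?L - 1 \<in> {..<?L}" using L3 by simp
    then have "cedge vs (?L - 1) \<in> C" unfolding C_def by (rule imageI)
    then show ?thesis using \<open>cedge vs (?L - 1) = {v, u}\<close> e(2) by (simp add: insert_commute)
  qed
  moreover have "distinct vs" using dist vs_def by simp
  ultimately have "C \<subseteq> E \<and> distinct vs \<and> length vs \<ge> 3 \<and> C = cedge vs ` {..<length vs}"
    using L3 C_def by blast
  then have "is_cycle E C" unfolding is_cycle_alt by blast
  then show ?thesis using \<open>e \<in> C\<close> by blast
qed



definition ncomp :: "'a set \<Rightarrow> 'a set set \<Rightarrow> nat" where
  "ncomp V F = card ((\<lambda>v. {w\<in>V. reach F v w}) ` V)"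

definition unicyc :: "'a set set \<Rightarrow> bool" where
  "unicyc F \<longleftrightarrow> (\<forall>e\<in>F. \<forall>C1 C2. is_cycle F C1 \<and> is_cycle F C2 \<and> e \<in> C1 \<and> e \<in> C2 \<longrightarrow> C1 = C2)"

definition bridges :: "'a set set \<Rightarrow> 'a set set" where
  "bridges F = {e\<in>F. \<not> (\<exists>C. is_cycle F C \<and> e \<in> C)}"

lemma cycle_subset: "is_cycle F C \<Longrightarrow> C \<subseteq> F"
  unfolding is_cycle_def by blast

lemma is_cycle_mono: "is_cycle F C \<Longrightarrow> F \<subseteq> F' \<Longrightarrow> is_cycle F' C"
  by (rule is_cycle_sub) (auto dest: cycle_subset)

lemma unicycD: "unicyc F \<Longrightarrow> e \<in> F \<Longrightarrow> is_cycle F C1 \<Longrightarrow> is_cycle F C2 \<Longrightarrow> e \<in> C1 \<Longrightarrow> e \<in> C2 \<Longrightarrow> C1 = C2"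
  unfolding unicyc_def by blast

lemma unicyc_mono: assumes "unicyc F'" "F \<subseteq> F'" shows "unicyc F"
  unfolding unicyc_def
proof (intro ballI allI impI)
  fix e C1 C2 assume e: "e \<in> F" and h: "is_cycle F C1 \<and> is_cycle F C2 \<and> e \<in> C1 \<and> e \<in> C2"
  have "is_cycle F' C1" "is_cycle F' C2"
    using h is_cycle_mono assms(2) by blast+
  moreover have "e \<in> F'" using e assms(2) by blast
  ultimately show "C1 = C2" using unicycD[OF assms(1)] h by blast
qed

lemma cl_eq: assumes "reach F v x" shows "{w\<in>V. reach F x w} = {w\<in>V. reach F v w}"
proof -
  have "reach F x w \<longleftrightarrow> reach F v w" for w
    using assms reach_sym[OF assms] rtranclp_trans[of "adj F" v x w] rtranclp_trans[of "adj F" x v w] by blast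
  then show ?thesis by simp
qed

lemma ncomp_map:
  assumes fin: "finite V" and sub: "F \<subseteq> F'"
  shows "ncomp V F' \<le> ncomp V F"
    and "u \<in> V \<Longrightarrow> v \<in> V \<Longrightarrow> reach F' u v \<Longrightarrow> \<not> reach F u v \<Longrightarrow> ncomp V F' < ncomp V F"
proof -
  define cl where "cl = (\<lambda>v. {w\<in>V. reach F v w})"
  define cl' where "cl' = (\<lambda>v. {w\<in>V. reach F' v w})"
  define \<phi> where "\<phi> = (\<lambda>S. cl' (SOME v. v \<in> S))"
  have phi: "\<phi> (cl v) = cl' v" if "v \<in> V" for v
  proof -
    have "v \<in> cl v" unfolding cl_def using that by simp
    then have "(SOME x. x \<in> cl v) \<in> cl v" by (rule someI)
    then have "reach F v (SOME x. x \<in> cl v)" unfolding cl_def by simp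
    then have "reach F' v (SOME x. x \<in> cl v)" by (rule reach_mono[OF _ sub])
    then show ?thesis unfolding \<phi>_def cl'_def by (rule cl_eq)
  qed
  have img: "cl' ` V = \<phi> ` (cl ` V)"
    unfolding image_image using phi by (intro image_cong) auto
  have fin2: "finite (cl ` V)" using fin by simp
  show "ncomp V F' \<le> ncomp V F"
    unfolding ncomp_def cl_def[symmetric] cl'_def[symmetric] img by (rule card_image_le[OF fin2])
  assume uv: "u \<in> V" "v \<in> V" "reach F' u v" "\<not> reach F u v"
  have "cl u \<noteq> cl v"
  proof
    assume "cl u = cl v"
    moreover have "v \<in> cl v" unfolding cl_def using uv by simp
    ultimately have "v \<in> cl u" by simp
    then show False using uv unfolding cl_def by simp
  qed
  moreover have "\<phi> (cl u) = \<phi> (cl v)" using phi uv cl_eq[OF uv(3)] unfolding cl'_def by simp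
  ultimately have "\<not> inj_on \<phi> (cl ` V)" using uv unfolding inj_on_def by blast
  then have "card (\<phi> ` (cl ` V)) \<noteq> card (cl ` V)" using inj_on_iff_eq_card[OF fin2] by blast
  moreover have "card (\<phi> ` (cl ` V)) \<le> card (cl ` V)" by (rule card_image_le[OF fin2])
  ultimately show "ncomp V F' < ncomp V F"
    unfolding ncomp_def cl_def[symmetric] cl'_def[symmetric] img by linarith
qed

lemma reach_empty: "reach {} v w \<Longrightarrow> v = w"
  by (induction rule: rtranclp_induct) (auto simp: adj_def)

lemma ncomp_empty: "ncomp V {} = card V"
proof -
  have "(\<lambda>v. {w\<in>V. reach {} v w}) ` V = (\<lambda>v. {v}) ` V"
    by (intro image_cong) (auto dest: reach_empty)
  then show ?thesis unfolding ncomp_def by (simp add: card_image)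
qed

lemma ncomp_conn: "V \<noteq> {} \<Longrightarrow> connected_graph V F \<Longrightarrow> ncomp V F = 1"
proof -
  assume V: "V \<noteq> {}" and c: "connected_graph V F"
  have "(\<lambda>v. {w\<in>V. reach F v w}) ` V = (\<lambda>v. V) ` V"
    using c unfolding connected_graph_def by (intro image_cong) auto
  also have "\<dots> = {V}" using V by auto
  finally show ?thesis unfolding ncomp_def by simp
qed

lemma card_inc:
  assumes "finite F" "e \<notin> F"
  shows "card {x\<in>insert e F. w \<in> x} = card {x\<in>F. w \<in> x} + (if w \<in> e then 1 else 0)"
proof (cases "w \<in> e")
  case True
  then have "{x\<in>insert e F. w \<in> x} = insert e {x\<in>F. w \<in> x}" by auto
  then show ?thesis using assms True by simp
next
  case False
  then have "{x\<in>insert e F. w \<in> x} = {x\<in>F. w \<in> x}" by auto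
  then show ?thesis using False by simp
qed

lemma nec_inv:
  assumes "finite F" "finite V" "\<forall>e\<in>F. e \<subseteq> V \<and> card e = 2" "unicyc F"
  shows "2 * card F + card (bridges F) + 3 * ncomp V F \<le> 3 * card V \<and>
         (\<forall>w. even (degree F w + card {x\<in>bridges F. w \<in> x}))"
  using assms
proof (induction F rule: finite_induct)
  case empty
  then show ?case by (simp add: bridges_def ncomp_empty degree_def)
next
  case (insert e F)
  let ?F' = "insert e F"
  have unF: "unicyc F" using insert.prems unicyc_mono by blast
  have IH: "2 * card F + card (bridges F) + 3 * ncomp V F \<le> 3 * card V"
    "\<And>w. even (degree F w + card {x\<in>bridges F. w \<in> x})"
    using insert.IH insert.prems unF by auto
  have eV: "e \<subseteq> V" "card e = 2" using insert.prems by auto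
  then obtain u v where uv: "e = {u, v}" "u \<noteq> v" by (meson card_2_iff)
  have uvV: "u \<in> V" "v \<in> V" using uv eV by auto
  have finb: "finite (bridges F)" "finite (bridges ?F')" using insert.hyps unfolding bridges_def by auto
  have degF': "degree ?F' w = degree F w + (if w \<in> e then 1 else 0)" for w
    unfolding degree_def using card_inc[OF insert.hyps] .
  show ?case
  proof (cases "\<exists>C. is_cycle ?F' C \<and> e \<in> C")
    case False
    have cyc_iff: "(\<exists>C. is_cycle ?F' C \<and> f \<in> C) \<longleftrightarrow> (\<exists>C. is_cycle F C \<and> f \<in> C)" for f
    proof
      assume "\<exists>C. is_cycle ?F' C \<and> f \<in> C"
      then obtain C where C: "is_cycle ?F' C" "f \<in> C" by blast
      then have "e \<notin> C" using False by blast
      then have "C \<subseteq> F" using cycle_subset[OF C(1)] by blast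
      then show "\<exists>C. is_cycle F C \<and> f \<in> C" using C is_cycle_sub[OF C(1)] by blast
    next
      assume "\<exists>C. is_cycle F C \<and> f \<in> C"
      then obtain C where "is_cycle F C" "f \<in> C" by blast
      then show "\<exists>C. is_cycle ?F' C \<and> f \<in> C" using is_cycle_mono[OF _ subset_insertI] by blast
    qed
    have br: "bridges ?F' = insert e (bridges F)"
      unfolding bridges_def using cyc_iff False by auto
    have "e \<notin> bridges F" using insert.hyps unfolding bridges_def by auto
    then have cb: "card (bridges ?F') = card (bridges F) + 1" using br finb by simp
    have bdeg: "card {x\<in>bridges ?F'. w \<in> x} = card {x\<in>bridges F. w \<in> x} + (if w \<in> e then 1 else 0)" for w
      unfolding br using card_inc[OF finb(1) \<open>e \<notin> bridges F\<close>] .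
    have nr: "\<not> reach F u v"
    proof
      assume "reach F u v"
      moreover have "?F' - {e} = F" using insert.hyps by auto
      ultimately have "reach (?F' - {e}) u v" by simp
      then show False using path_cycle[of e ?F' u v] uv False by auto
    qed
    have "adj ?F' u v" unfolding adj_def using uv by simp
    then have "reach ?F' u v" by simp
    then have "ncomp V ?F' < ncomp V F"
      using ncomp_map(2)[OF insert.prems(1) _ uvV] nr by blast
    then have "2 * card ?F' + card (bridges ?F') + 3 * ncomp V ?F' \<le> 3 * card V"
      using IH(1) cb insert.hyps by simp
    moreover have "even (degree ?F' w + card {x\<in>bridges ?F'. w \<in> x})" for w
      using IH(2)[of w] degF'[of w] bdeg[of w] by simp
    ultimately show ?thesis by blast
  next
    case True
    then obtain C where C: "is_cycle ?F' C" "e \<in> C" by blast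
    have finC: "finite C" "card C \<ge> 3" using cycle_card[OF C(1)] by auto
    have brF: "bridges F = bridges ?F' \<union> (C - {e})"
    proof (rule set_eqI, rule iffI)
      fix f assume f: "f \<in> bridges F"
      then have fF: "f \<in> F" and nc: "\<not> (\<exists>D. is_cycle F D \<and> f \<in> D)" unfolding bridges_def by auto
      show "f \<in> bridges ?F' \<union> (C - {e})"
      proof (cases "\<exists>D. is_cycle ?F' D \<and> f \<in> D")
        case True
        then obtain D where D: "is_cycle ?F' D" "f \<in> D" by blast
        have "e \<in> D"
        proof (rule ccontr)
          assume "e \<notin> D"
          then have "D \<subseteq> F" using cycle_subset[OF D(1)] by blast
          then show False using nc D(2) is_cycle_sub[OF D(1)] by blast
        qed
        then have "D = C" using unicycD[OF insert.prems(3) _ D(1) C(1) _ C(2)] by blast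
        then show ?thesis using D fF insert.hyps by auto
      next
        case False
        then show ?thesis using fF unfolding bridges_def by auto
      qed
    next
      fix f assume f: "f \<in> bridges ?F' \<union> (C - {e})"
      then show "f \<in> bridges F"
      proof
        assume "f \<in> bridges ?F'"
        then have "f \<in> ?F'" "\<not> (\<exists>D. is_cycle ?F' D \<and> f \<in> D)" unfolding bridges_def by auto
        moreover have "f \<noteq> e" using C \<open>\<not> (\<exists>D. is_cycle ?F' D \<and> f \<in> D)\<close> by blast
        moreover have "\<not> (\<exists>D. is_cycle F D \<and> f \<in> D)"
          using is_cycle_mono[OF _ subset_insertI] \<open>\<not> (\<exists>D. is_cycle ?F' D \<and> f \<in> D)\<close> by blast
        ultimately show ?thesis unfolding bridges_def by blast
      next
        assume fC: "f \<in> C - {e}"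
        then have fF: "f \<in> F" using cycle_subset[OF C(1)] by blast
        have "\<not> (\<exists>D. is_cycle F D \<and> f \<in> D)"
        proof
          assume "\<exists>D. is_cycle F D \<and> f \<in> D"
          then obtain D where D: "is_cycle F D" "f \<in> D" by blast
          have D': "is_cycle ?F' D" using is_cycle_mono[OF D(1) subset_insertI] .
          have "D = C" using unicycD[OF insert.prems(3) _ D' C(1) D(2)] fC fF by blast
          then have "e \<in> F" using C(2) cycle_subset[OF D(1)] by blast
          then show False using insert.hyps by simp
        qed
        then show ?thesis using fF unfolding bridges_def by simp
      qed
    qed
    have disj: "bridges ?F' \<inter> (C - {e}) = {}" unfolding bridges_def using C(1) by blast
    have cbr: "card (bridges F) = card (bridges ?F') + (card C - 1)"
      unfolding brF using card_Un_disjoint[OF finb(2) _ disj] finC C(2) by simp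
    have nc: "ncomp V ?F' \<le> ncomp V F" using ncomp_map(1)[OF insert.prems(1)] by blast
    have "2 * card ?F' + card (bridges ?F') + 3 * ncomp V ?F' \<le> 3 * card V"
      using IH(1) cbr nc finC insert.hyps by simp
    moreover have "even (degree ?F' w + card {x\<in>bridges ?F'. w \<in> x})" for w
    proof -
      have s1: "{x\<in>bridges F. w \<in> x} = {x\<in>bridges ?F'. w \<in> x} \<union> {x\<in>C - {e}. w \<in> x}"
        unfolding brF by auto
      have f1: "finite {x\<in>bridges ?F'. w \<in> x}" "finite {x\<in>C - {e}. w \<in> x}" using finb finC by auto
      have c1: "card {x\<in>bridges F. w \<in> x} = card {x\<in>bridges ?F'. w \<in> x} + card {x\<in>C - {e}. w \<in> x}"
        unfolding s1 by (rule card_Un_disjoint[OF f1]) (use disj in blast)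
      have "{x\<in>C. w \<in> x} = {x\<in>insert e (C - {e}). w \<in> x}" using C(2) by auto
      then have c2: "card {x\<in>C. w \<in> x} = card {x\<in>C - {e}. w \<in> x} + (if w \<in> e then 1 else 0)"
        using card_inc[of "C - {e}" e w] finC by simp
      have "even (card {x\<in>C. w \<in> x})" by (rule cycle_deg[OF C(1)])
      then show ?thesis using IH(2)[of w] degF'[of w] c1 c2 by (cases "w \<in> e") auto
    qed
    ultimately show ?thesis by blast
  qed
qed



lemma bridgeless_from_cycles:
  assumes c: "connected_graph V E" and cyc: "\<forall>e\<in>E. \<exists>C. is_cycle E C \<and> e \<in> C"
  shows "bridgeless V E"
  unfolding bridgeless_def
proof
  fix e assume eE: "e \<in> E"
  then obtain C where C: "is_cycle E C" "e \<in> C" using cyc by blast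
  obtain x y where xy: "e = {x, y}" "reach (C - {e}) x y" using cycle_edge_conn[OF C] by blast
  have CE: "C - {e} \<subseteq> E - {e}" using cycle_subset[OF C(1)] by blast
  have rxy: "reach (E - {e}) x y" by (rule reach_mono[OF xy(2) CE])
  have step: "reach (E - {e}) p q" if "adj E p q" for p q
  proof (cases "{p, q} = e")
    case True
    then have "(p = x \<and> q = y) \<or> (p = y \<and> q = x)" using xy(1) by (auto simp: doubleton_eq_iff)
    then show ?thesis
    proof
      assume "p = x \<and> q = y" then show ?thesis using rxy by simp
    next
      assume "p = y \<and> q = x" then show ?thesis using reach_sym[OF rxy] by simp
    qed
  next
    case False
    then have "adj (E - {e}) p q" using that unfolding adj_def by simp
    then show ?thesis by simp
  qed
  have "reach (E - {e}) u w" if "reach E u w" for u w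
    using that
  proof (induction rule: rtranclp_induct)
    case base then show ?case by simp
  next
    case (step y z)
    have "reach (E - {e}) y z" using step.hyps(2) by (rule \<open>\<And>p q. adj E p q \<Longrightarrow> reach (E - {e}) p q\<close>)
    with step.IH show ?case by (rule rtranclp_trans)
  qed
  then show "connected_graph V (E - {e})" using c unfolding connected_graph_def by blast
qed

lemma conn_root:
  assumes "\<forall>x\<in>V. reach E r x"
  shows "connected_graph V E"
  unfolding connected_graph_def
proof (intro ballI)
  fix u v assume "u \<in> V" "v \<in> V"
  then have "reach E r u" "reach E r v" using assms by auto
  then have "reach E u r" "reach E r v" using reach_sym by auto
  then show "reach E u v" by (rule rtranclp_trans)
qed

lemma handshake:
  assumes "finite V" "\<forall>e\<in>E. e \<subseteq> V \<and> card e = 2"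
  shows "(\<Sum>v\<in>V. degree E v) = 2 * card E"
proof -
  have "E \<subseteq> Pow V" using assms(2) by auto
  then have finE: "finite E" using assms(1) by (simp add: finite_subset)
  have "(\<Sum>v\<in>V. degree E v) = (\<Sum>v\<in>V. \<Sum>e\<in>E. if v \<in> e then 1 else 0)"
    unfolding degree_def using sum.inter_filter[OF finE, of "\<lambda>_. 1::nat"] by simp
  also have "\<dots> = (\<Sum>e\<in>E. \<Sum>v\<in>V. if v \<in> e then 1 else 0)" by (rule sum.swap)
  also have "\<dots> = (\<Sum>e\<in>E. card (V \<inter> e))" using assms(1) by (simp add: sum.If_cases)
  also have "\<dots> = (\<Sum>e\<in>E. 2)"
  proof (rule sum.cong)
    fix e assume "e \<in> E"
    then have "V \<inter> e = e" "card e = 2" using assms by auto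
    then show "card (V \<inter> e) = 2" by simp
  qed simp
  finally show ?thesis by simp
qed

lemma cycle_star:
  assumes D: "is_cycle E D" and zx: "z \<in> x" "x \<in> D" and finE: "finite E"
    and c2: "card {x\<in>E. z \<in> x} \<le> 2"
  shows "{x\<in>D. z \<in> x} = {x\<in>E. z \<in> x}"
proof -
  obtain ws where ws: "distinct ws" "length ws \<ge> 3" "D = cedge ws ` {..<length ws}"
    using D unfolding is_cycle_alt by blast
  have "z \<in> set ws" using cyc_vertex[OF zx(1)] zx(2) ws(3) by blast
  then have cD: "card {x\<in>D. z \<in> x} = 2" using cyc_deg[OF ws(1,2), of z] ws(3) by simp
  have sub: "{x\<in>D. z \<in> x} \<subseteq> {x\<in>E. z \<in> x}" using cycle_subset[OF D] by blast
  have fin: "finite {x\<in>E. z \<in> x}" using finE by simp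
  have "card {x\<in>E. z \<in> x} \<le> card {x\<in>D. z \<in> x}" using c2 cD by simp
  then show ?thesis using card_subset_eq[OF fin sub] card_mono[OF fin sub] by linarith
qed

lemma triangle_cycle:
  assumes "h \<noteq> a" "a \<noteq> b" "b \<noteq> h"
  shows "cedge [h, a, b] ` {..<3} = {{h, a}, {a, b}, {b, h}}"
proof -
  have "{..<3::nat} = {0, 1, 2}" by auto
  then show ?thesis by (simp add: cedge_def)
qed

lemma suff:
  fixes V :: "nat set"
  assumes "finite V" "card V \<ge> 3" "\<forall>v\<in>V. even (f v) \<and> f v \<ge> 2" "(\<Sum>v\<in>V. f v) \<le> 3 * (card V - 1)"
  shows "\<exists>E. (\<forall>e\<in>E. e \<subseteq> V \<and> card e = 2) \<and> (\<forall>v\<in>V. degree E v = f v) \<and>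
             connected_graph V E \<and> unicyc E \<and> (\<forall>e\<in>E. \<exists>C. is_cycle E C \<and> e \<in> C)"
  using assms
proof (induction "card V" arbitrary: V f rule: less_induct)
  case less
  note fin = less.prems(1) and c3 = less.prems(2) and fv = less.prems(3) and sm = less.prems(4)
  show ?case
  proof (cases "\<forall>v\<in>V. f v = 2")
    case True
    define vs where "vs = sorted_list_of_set V"
    have vs: "distinct vs" "set vs = V" "length vs = card V" unfolding vs_def using fin by auto
    have L3: "length vs \<ge> 3" using vs c3 by simp
    define E where "E = cedge vs ` {..<length vs}"
    have cycE: "is_cycle E E" unfolding is_cycle_alt E_def using vs(1) L3 by (intro conjI exI[of _ vs]) auto
    have edges: "\<forall>e\<in>E. e \<subseteq> V \<and> card e = 2"
    proof
      fix e assume "e \<in> E"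
      then obtain i where i: "i < length vs" "e = cedge vs i" unfolding E_def by blast
      have "e \<subseteq> set vs"
      proof
        fix w assume "w \<in> e"
        from cyc_vertex[OF this] show "w \<in> set vs" using \<open>e \<in> E\<close> unfolding E_def by simp
      qed
      then show "e \<subseteq> V \<and> card e = 2" using cedge_card2[OF vs(1) L3 i(1)] i vs by simp
    qed
    have deg: "\<forall>v\<in>V. degree E v = f v"
      using cyc_deg[OF vs(1) L3] True vs(2) unfolding degree_def E_def by simp
    have r0: "reach E (vs ! 0) x" if "x \<in> V" for x
    proof -
      have "x \<in> set vs" using that vs(2) by simp
      then obtain k where k: "k < length vs" "x = vs ! k" unfolding in_set_conv_nth by blast
      then show ?thesis using cycle_conn_all[OF vs(1) L3 k(1)] unfolding E_def by simp
    qed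
    have conn: "connected_graph V E" using r0 by (intro conn_root) blast
    have un: "unicyc E" unfolding unicyc_def
    proof (intro ballI allI impI)
      fix e C1 C2 assume h12: "is_cycle E C1 \<and> is_cycle E C2 \<and> e \<in> C1 \<and> e \<in> C2"
      then have c1: "is_cycle E C1" and c2: "is_cycle E C2" by auto
      have "C1 = E" using cycle_sub_eq[OF c1 cycE cycle_subset[OF c1]] .
      moreover have "C2 = E" using cycle_sub_eq[OF c2 cycE cycle_subset[OF c2]] .
      ultimately show "C1 = C2" by simp
    qed
    show ?thesis using edges deg conn un cycE by (intro exI[of _ E]) blast
  next
    case False
    then obtain h where h: "h \<in> V" "f h \<noteq> 2" by blast
    have ge4: "f v \<ge> 4" if "v \<in> V" "f v \<noteq> 2" for v
    proof -
      have "even (f v)" "f v \<ge> 2" using fv that by auto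
      then show ?thesis using that(2) by presburger
    qed
    define A where "A = {v\<in>V. f v = 2}"
    have AV: "A \<subseteq> V" unfolding A_def by blast
    have finA: "finite A" using fin AV finite_subset by blast
    have s1: "(\<Sum>v\<in>V. f v) = (\<Sum>v\<in>A. f v) + (\<Sum>v\<in>V - A. f v)"
      using sum.subset_diff[OF AV fin, of f] by linarith
    have "(\<Sum>v\<in>A. f v) = (\<Sum>v\<in>A. 2)" by (rule sum.cong) (auto simp: A_def)
    then have s2: "(\<Sum>v\<in>A. f v) = 2 * card A" by simp
    have s3: "(\<Sum>v\<in>V - A. f v) \<ge> 4 * card (V - A)"
    proof -
      have "(\<Sum>v\<in>V - A. f v) \<ge> (\<Sum>v\<in>V - A. 4)" by (rule sum_mono) (use ge4 A_def in auto)
      then show ?thesis by simp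
    qed
    have cVA: "card (V - A) = card V - card A" using card_Diff_subset[OF finA AV] .
    have cA: "card A \<le> card V" using card_mono[OF fin AV] .
    have hVA: "h \<in> V - A" using h unfolding A_def by simp
    then have "card (V - A) > 0" using fin by (auto simp: card_gt_0_iff)
    then have "card (V - A) \<ge> 1" by simp
    have key: "2 * card A + 4 * (card V - card A) \<le> 3 * (card V - 1)"
      using s1 s2 s3 cVA sm by linarith
    have n5: "card V \<ge> 5" and A2: "card A \<ge> 2"
      using key \<open>card (V - A) \<ge> 1\<close> cVA cA c3 by linarith+
    have "A \<noteq> {}" using A2 by auto
    then obtain a where a: "a \<in> A" by blast
    have "card (A - {a}) \<ge> 1" using A2 a finA by simp
    then have "A - {a} \<noteq> {}" by (intro notI) simp
    then obtain b where b: "b \<in> A" "b \<noteq> a" by blast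
    have aV: "a \<in> V" "f a = 2" and bV: "b \<in> V" "f b = 2" using a b unfolding A_def by auto
    have ha: "h \<noteq> a" "h \<noteq> b" using h aV bV by auto
    define V' where "V' = V - {a, b}"
    define f' where "f' = f(h := f h - 2)"
    have finV': "finite V'" using fin unfolding V'_def by simp
    have cV': "card V' = card V - 2" unfolding V'_def using aV bV b(2) fin by (simp add: card_Diff_subset)
    have hV': "h \<in> V'" unfolding V'_def using h ha by simp
    have lt: "card V' < card V" using cV' c3 by simp
    have c3': "card V' \<ge> 3" using cV' n5 by simp
    have fv': "\<forall>v\<in>V'. even (f' v) \<and> f' v \<ge> 2"
    proof
      fix v assume v: "v \<in> V'"
      then have "v \<in> V" unfolding V'_def by simp
      show "even (f' v) \<and> f' v \<ge> 2"
      proof (cases "v = h")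
        case True
        have "f h \<ge> 4" "even (f h)" using ge4 h fv by auto
        then show ?thesis using True unfolding f'_def by simp
      next
        case False
        then show ?thesis using fv \<open>v \<in> V\<close> unfolding f'_def by simp
      qed
    qed
    have sV': "(\<Sum>v\<in>V'. f v) = (\<Sum>v\<in>V. f v) - 4"
    proof -
      have "{a, b} \<subseteq> V" using aV bV by simp
      then have "(\<Sum>v\<in>V. f v) = (\<Sum>v\<in>{a,b}. f v) + (\<Sum>v\<in>V'. f v)"
        unfolding V'_def using sum.subset_diff[of "{a,b}" V f] fin by simp
      then show ?thesis using aV bV b(2) by simp
    qed
    have sf': "(\<Sum>v\<in>V'. f' v) = (\<Sum>v\<in>V'. f v) - 2"
    proof -
      have "(\<Sum>v\<in>V'. f' v) = f' h + (\<Sum>v\<in>V' - {h}. f' v)" using sum.remove[OF finV' hV'] .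
      also have "(\<Sum>v\<in>V' - {h}. f' v) = (\<Sum>v\<in>V' - {h}. f v)" unfolding f'_def by (rule sum.cong) auto
      finally have "(\<Sum>v\<in>V'. f' v) = (f h - 2) + (\<Sum>v\<in>V' - {h}. f v)" unfolding f'_def by simp
      moreover have "(\<Sum>v\<in>V'. f v) = f h + (\<Sum>v\<in>V' - {h}. f v)" using sum.remove[OF finV' hV'] .
      moreover have "f h \<ge> 4" using ge4 h by auto
      ultimately show ?thesis by simp
    qed
    have "(\<Sum>v\<in>V. f v) \<ge> 6" using s1 s2 s3 A2 \<open>card (V - A) \<ge> 1\<close> by linarith
    then have sm': "(\<Sum>v\<in>V'. f' v) \<le> 3 * (card V' - 1)" using sf' sV' sm cV' n5 by simp
    obtain E' where E': "\<forall>e\<in>E'. e \<subseteq> V' \<and> card e = 2" "\<forall>v\<in>V'. degree E' v = f' v"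
      "connected_graph V' E'" "unicyc E'" "\<forall>e\<in>E'. \<exists>C. is_cycle E' C \<and> e \<in> C"
      using less.hyps[OF lt finV' c3' fv' sm'] by blast
    define T where "T = {{h, a}, {a, b}, {b, h}}"
    define E where "E = E' \<union> T"
    have l3: "{..<length [h, a, b]} = {..<3}" by simp
    have Tc: "T = cedge [h, a, b] ` {..<length [h, a, b]}"
      unfolding l3 using triangle_cycle[of h a b] ha b(2) unfolding T_def by simp
    have abE': "\<forall>x\<in>E'. a \<notin> x \<and> b \<notin> x" using E'(1) unfolding V'_def by blast
    have Tab: "\<forall>x\<in>T. a \<in> x \<or> b \<in> x" unfolding T_def by blast
    have disj: "E' \<inter> T = {}" using abE' Tab by blast
    have "E' \<subseteq> Pow V'" using E'(1) by auto
    then have finE': "finite E'" using finV' by (simp add: finite_subset)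
    have finE: "finite E" unfolding E_def T_def using finE' by simp
    have dist3: "distinct [h, a, b]" using ha b(2) by auto
    have len3: "length [h, a, b] \<ge> 3" by simp
    have cycT: "is_cycle E T" unfolding is_cycle_alt
    proof (intro conjI exI[of _ "[h, a, b]"])
      show "T \<subseteq> E" unfolding E_def by blast
    qed (rule dist3, rule len3, rule Tc)
    have Tdeg: "card {x\<in>T. v \<in> x} = (if v \<in> {h, a, b} then 2 else 0)" for v
    proof -
      have "card {x\<in>T. v \<in> x} = (if v \<in> set [h, a, b] then 2 else 0)"
        unfolding Tc by (rule cyc_deg[OF dist3 len3])
      then show ?thesis by simp
    qed
    have degE: "degree E v = degree E' v + card {x\<in>T. v \<in> x}" for v
    proof -
      have "{x\<in>E. v \<in> x} = {x\<in>E'. v \<in> x} \<union> {x\<in>T. v \<in> x}" unfolding E_def by blast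
      moreover have "finite {x\<in>E'. v \<in> x}" "finite {x\<in>T. v \<in> x}" using finE' unfolding T_def by auto
      ultimately show ?thesis unfolding degree_def using disj by (simp add: card_Un_disjoint disjoint_iff)
    qed
    have deg0: "degree E' v = 0" if "v = a \<or> v = b" for v
    proof -
      have e0: "{e\<in>E'. v \<in> e} = {}" using abE' that by auto
      show ?thesis unfolding degree_def e0 by simp
    qed
    have edges: "\<forall>e\<in>E. e \<subseteq> V \<and> card e = 2"
      using E'(1) aV bV h ha b(2) unfolding E_def T_def V'_def by auto
    have deg: "\<forall>v\<in>V. degree E v = f v"
    proof
      fix v assume v: "v \<in> V"
      show "degree E v = f v"
      proof (cases "v = a \<or> v = b")
        case True
        then show ?thesis using deg0[OF True] degE[of v] Tdeg[of v] aV bV by auto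
      next
        case False
        then have vV': "v \<in> V'" unfolding V'_def using v by simp
        show ?thesis
        proof (cases "v = h")
          case True
          have "f h \<ge> 4" using ge4 h by auto
          then show ?thesis using True degE[of h] Tdeg[of h] E'(2) hV' unfolding f'_def by simp
        next
          case False
          then have "v \<notin> {h, a, b}" using \<open>\<not> (v = a \<or> v = b)\<close> by simp
          then show ?thesis using degE[of v] Tdeg[of v] E'(2) vV' False unfolding f'_def by simp
        qed
      qed
    qed
    have EE': "E' \<subseteq> E" unfolding E_def by blast
    have rh: "reach E x h" if "x \<in> V" for x
    proof (cases "x = a \<or> x = b")
      case True
      then have "adj E x h" unfolding adj_def E_def T_def by (auto simp: insert_commute)
      then show ?thesis by simp
    next
      case False
      then have "x \<in> V'" using that unfolding V'_def by simp
      then have "reach E' x h" using E'(3) hV' unfolding connected_graph_def by blast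
      then show ?thesis by (rule reach_mono[OF _ EE'])
    qed
    have conn: "connected_graph V E"
    proof (rule conn_root[of V E h], intro ballI)
      fix x assume "x \<in> V"
      show "reach E h x" using reach_sym[OF rh[OF \<open>x \<in> V\<close>]] .
    qed
    have oncyc: "\<forall>e\<in>E. \<exists>C. is_cycle E C \<and> e \<in> C"
    proof
      fix e assume "e \<in> E"
      then consider "e \<in> E'" | "e \<in> T" unfolding E_def by blast
      then show "\<exists>C. is_cycle E C \<and> e \<in> C"
      proof cases
        case 1
        then obtain C where "is_cycle E' C" "e \<in> C" using E'(5) by blast
        then show ?thesis using is_cycle_mono[OF \<open>is_cycle E' C\<close> EE'] by blast
      next
        case 2
        then show ?thesis using cycT by blast
      qed
    qed
    have starA: "{x\<in>E. a \<in> x} = {{h, a}, {a, b}}"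
      using abE' ha b(2) unfolding E_def T_def by auto
    have starB: "{x\<in>E. b \<in> x} = {{a, b}, {b, h}}"
      using abE' ha b(2) unfolding E_def T_def by auto
    have cA2: "card {x\<in>E. a \<in> x} \<le> 2" unfolding starA by (simp add: card_insert_le_m1)
    have cB2: "card {x\<in>E. b \<in> x} \<le> 2" unfolding starB by (simp add: card_insert_le_m1)
    have cyc_cases: "D = T \<or> is_cycle E' D" if D: "is_cycle E D" for D
    proof (cases "\<exists>x\<in>D. a \<in> x \<or> b \<in> x")
      case True
      have "T \<subseteq> D"
      proof -
        have bD: "\<exists>x\<in>D. b \<in> x"
        proof (cases "\<exists>x\<in>D. a \<in> x")
          case True
          then obtain x where "a \<in> x" "x \<in> D" by blast
          then have "{x\<in>D. a \<in> x} = {x\<in>E. a \<in> x}" by (rule cycle_star[OF D _ _ finE cA2])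
          then have "{a, b} \<in> D" unfolding starA by blast
          then show ?thesis by blast
        next
          case False
          then show ?thesis using \<open>\<exists>x\<in>D. a \<in> x \<or> b \<in> x\<close> by blast
        qed
        then obtain x where "b \<in> x" "x \<in> D" by blast
        then have sb: "{x\<in>D. b \<in> x} = {x\<in>E. b \<in> x}" by (rule cycle_star[OF D _ _ finE cB2])
        then have "{a, b} \<in> D" "{b, h} \<in> D" unfolding starB by blast+
        have "a \<in> {a, b}" by simp
        then have "{x\<in>D. a \<in> x} = {x\<in>E. a \<in> x}" using \<open>{a, b} \<in> D\<close> by (rule cycle_star[OF D _ _ finE cA2])
        then have "{h, a} \<in> D" unfolding starA by blast
        then show "T \<subseteq> D" using \<open>{a, b} \<in> D\<close> \<open>{b, h} \<in> D\<close> unfolding T_def by blast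
      qed
      then show ?thesis using cycle_sub_eq[OF cycT D] by blast
    next
      case False
      have "D \<subseteq> E'"
      proof
        fix x assume "x \<in> D"
        then have "x \<in> E" "x \<notin> T" using cycle_subset[OF D] False Tab by blast+
        then show "x \<in> E'" unfolding E_def by blast
      qed
      then show ?thesis using is_cycle_sub[OF D] by blast
    qed
    have un: "unicyc E" unfolding unicyc_def
    proof (intro ballI allI impI)
      fix e C1 C2 assume e: "e \<in> E" and h12: "is_cycle E C1 \<and> is_cycle E C2 \<and> e \<in> C1 \<and> e \<in> C2"
      have c1: "C1 = T \<or> is_cycle E' C1" and c2: "C2 = T \<or> is_cycle E' C2" using cyc_cases h12 by blast+
      show "C1 = C2"
      proof (cases "e \<in> T")
        case True
        then have "a \<in> e \<or> b \<in> e" using Tab by blast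
        then have "\<not> is_cycle E' C1" "\<not> is_cycle E' C2"
          using h12 abE' cycle_subset by blast+
        then show ?thesis using c1 c2 by simp
      next
        case False
        then have "C1 \<noteq> T" "C2 \<noteq> T" using h12 by blast+
        then have "is_cycle E' C1" "is_cycle E' C2" using c1 c2 by simp_all
        moreover have "e \<in> E'" using e False unfolding E_def by blast
        ultimately show ?thesis using unicycD[OF E'(4)] h12 by blast
      qed
    qed
    show ?thesis using edges deg conn un oncyc by (intro exI[of _ E]) blast
  qed
qed



lemma nec_final:
  assumes sg: "simple_graph V E" and c: "connected_graph V E" and u: "unicyc E"
    and b: "bridgeless V E" and ne: "V \<noteq> {}"
  shows "2 * card E + 3 \<le> 3 * card V" "\<forall>w. even (degree E w)"
proof -
  have finV: "finite V" and ed: "\<forall>e\<in>E. e \<subseteq> V \<and> card e = 2" using sg unfolding simple_graph_def by auto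
  have "E \<subseteq> Pow V" using ed by auto
  then have finE: "finite E" using finV by (simp add: finite_subset)
  have br: "bridges E = {}"
  proof -
    have "\<exists>C. is_cycle E C \<and> e \<in> C" if eE: "e \<in> E" for e
    proof -
      obtain x y where xy: "e = {x, y}" "x \<noteq> y" using ed eE by (meson card_2_iff)
      have xyV: "x \<in> V" "y \<in> V" using ed eE xy by auto
      have "connected_graph V (E - {e})" using b eE unfolding bridgeless_def by blast
      then have "reach (E - {e}) x y" using xyV unfolding connected_graph_def by blast
      then show ?thesis using path_cycle[OF eE xy] by blast
    qed
    then show ?thesis unfolding bridges_def by blast
  qed
  have nc: "ncomp V E = 1" using ncomp_conn[OF ne c] .
  have inv: "2 * card E + card (bridges E) + 3 * ncomp V E \<le> 3 * card V \<and>
         (\<forall>w. even (degree E w + card {x\<in>bridges E. w \<in> x}))"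
    by (rule nec_inv[OF finE finV ed u])
  then show "2 * card E + 3 \<le> 3 * card V" "\<forall>w. even (degree E w)" using br nc by simp_all
qed

theorem theorem5p2:
  fixes n :: nat and d :: "nat \<Rightarrow> nat"
  assumes "degree_sequence n d" and "n \<ge> 3"
  shows "(\<exists>E. realization n d E \<and> cactus {1..n} E \<and> bridgeless {1..n} E) \<longleftrightarrow>
         (real ((\<Sum>i=1..n. d i) div 2) \<le> real_of_int \<lfloor>(3/2) * (real n - 1)\<rfloor> \<and>
          (\<forall>i\<in>{1..n}. even (d i)))"
proof
  assume "\<exists>E. realization n d E \<and> cactus {1..n} E \<and> bridgeless {1..n} E"
  then obtain E where r: "realization n d E" and ca: "cactus {1..n} E" and b: "bridgeless {1..n} E" by blast
  have sg: "simple_graph {1..n} E" and dg: "\<forall>i\<in>{1..n}. degree E i = d i"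
    using r unfolding realization_def by auto
  have c: "connected_graph {1..n} E" and u: "unicyc E"
    using ca unfolding cactus_def unicyc_def by auto
  have ne: "{1..n} \<noteq> {}" using assms(2) by simp
  note N = nec_final[OF sg c u b ne]
  have ed: "\<forall>e\<in>E. e \<subseteq> {1..n} \<and> card e = 2" using sg unfolding simple_graph_def by auto
  have "(\<Sum>i=1..n. d i) = (\<Sum>i=1..n. degree E i)" using dg by simp
  also have "\<dots> = 2 * card E" by (rule handshake[OF _ ed]) simp
  finally have sd: "(\<Sum>i=1..n. d i) div 2 = card E" by simp
  have ineq: "2 * card E + 3 \<le> 3 * n" using N(1) by simp
  have "real (2 * card E + 3) \<le> real (3 * n)" using ineq by (simp only: of_nat_le_iff)
  then have "2 * real (card E) + 3 \<le> 3 * real n" by simp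
  moreover have "3/2 * (real n - 1) = (3 * real n - 3) / 2" by (simp add: field_simps)
  ultimately have "real (card E) \<le> 3/2 * (real n - 1)" by simp
  then have "int (card E) \<le> \<lfloor>3/2 * (real n - 1)\<rfloor>" by (simp add: le_floor_iff)
  then have "real (card E) \<le> real_of_int \<lfloor>3/2 * (real n - 1)\<rfloor>" by linarith
  moreover have "\<forall>i\<in>{1..n}. even (d i)" using N(2) dg by metis
  ultimately show "real ((\<Sum>i=1..n. d i) div 2) \<le> real_of_int \<lfloor>(3/2) * (real n - 1)\<rfloor> \<and>
          (\<forall>i\<in>{1..n}. even (d i))" using sd by simp
next
  assume h: "real ((\<Sum>i=1..n. d i) div 2) \<le> real_of_int \<lfloor>(3/2) * (real n - 1)\<rfloor> \<and>
          (\<forall>i\<in>{1..n}. even (d i))"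
  have ds: "\<forall>i\<in>{1..n}. 1 \<le> d i" "even (\<Sum>i=1..n. d i)"
    using assms(1) unfolding degree_sequence_def by auto
  define S where "S = (\<Sum>i=1..n. d i)"
  have S2: "S = 2 * (S div 2)" using ds(2) unfolding S_def by simp
  have "real (S div 2) \<le> real_of_int \<lfloor>(3/2) * (real n - 1)\<rfloor>" using h unfolding S_def by simp
  also have "\<dots> \<le> (3/2) * (real n - 1)" by (rule of_int_floor_le)
  finally have "real (S div 2) \<le> (3/2) * (real n - 1)" .
  moreover have "real S = real (2 * (S div 2))" using S2 by (rule arg_cong)
  ultimately have "real S \<le> 3 * (real n - 1)" by simp
  moreover have "real (3 * (n - 1)) = 3 * (real n - 1)" using assms(2) by (simp add: of_nat_diff)
  ultimately have "real S \<le> real (3 * (n - 1))" by simp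
  then have Sle: "S \<le> 3 * (n - 1)" by (simp only: of_nat_le_iff)
  have fv: "\<forall>v\<in>{1..n}. even (d v) \<and> d v \<ge> 2"
  proof
    fix v assume v: "v \<in> {1..n}"
    then have "even (d v)" "d v \<ge> 1" using h ds by auto
    then show "even (d v) \<and> d v \<ge> 2" by presburger
  qed
  obtain E where E: "\<forall>e\<in>E. e \<subseteq> {1..n} \<and> card e = 2" "\<forall>v\<in>{1..n}. degree E v = d v"
      "connected_graph {1..n} E" "unicyc E" "\<forall>e\<in>E. \<exists>C. is_cycle E C \<and> e \<in> C"
    using suff[of "{1..n}" d] fv Sle assms(2) unfolding S_def by auto
  have sg: "simple_graph {1..n} E" unfolding simple_graph_def using E(1) by simp
  have "realization n d E" unfolding realization_def using sg E(2) by simp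
  moreover have "cactus {1..n} E" unfolding cactus_def using sg E(3) E(4) unfolding unicyc_def by simp
  moreover have "bridgeless {1..n} E" by (rule bridgeless_from_cycles[OF E(3) E(5)])
  ultimately show "\<exists>E. realization n d E \<and> cactus {1..n} E \<and> bridgeless {1..n} E" by blast
qed

end
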